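(* Let $\eta,\Sigma,\theta > 0$ and let $\tau \colon \mathbb{R}^{2} \to \mathbb{R}$ satisfy: ($\tau_{1}$) for every $t \in \mathbb{R}$, $y \mapsto \tau(y,t)$ is $C^{1,1}$ and $|\dot{\tau}(y_{2},t) - \dot{\tau}(y_{1},t)| \leq 2\Sigma|y_{2}-y_{1}|$ for all $y_{1},y_{2}$; ($\tau_{2}$) $\theta|t_{2}-t_{1}| \leq |\tau(y,t_{2}) - \tau(y,t_{1})| \leq \theta^{-1}|t_{2}-t_{1}|$ for all $t_{1},t_{2},y \in \mathbb{R}$; ($\tau_{3}$) $|\dot{\tau}(y,t_{2}) - \dot{\tau}(y,t_{1})| \leq \eta\sqrt{|t_{2}-t_{1}|}$ for all $y,t_{1},t_{2} \in \mathbb{R}$, where $\dot{\tau} = \partial_{y}\tau$. Define $\phi \colon \mathbb{W} \to \mathbb{L}$ by $\phi(0,y,\tau(y,t)) := (\dot{\tau}(y,t),0,0)$, let $\Gamma := \{w \cdot \phi(w) : w \in \mathbb{W}\}$, and $\Psi(y,t) := (0,y,\tau(y,t)) \cdot (\dot{\tau}(y,t),0,0)$. Then $\phi$ is an intrinsic Lipschitz function (i.e. $\Gamma$ is an intrinsic $L$-Lipschitz graph over $\mathbb{W}$), and $\Psi$ is a bilipschitz homeomorphism $(\mathbb{W},d_{\mathrm{par}}) \to (\Gamma,d)$; the intrinsic Lipschitz constant $L$ and the bilipschitz constant depend only on $\eta,\Sigma,\theta$.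
   Context: $\mathbb{H}$ is $\mathbb{R}^{3}$ with group law $(x_{1},y_{1},t_{1}) \cdot (x_{2},y_{2},t_{2}) = (x_{1}+x_{2},y_{1}+y_{2},t_{1}+t_{2}+\tfrac{1}{2}(x_{1}y_{2}-x_{2}y_{1}))$ and metric $d(p,q) = \|q^{-1}\cdot p\|$ with $\|(x,y,t)\| = \max\{\sqrt{x^{2}+y^{2}},\sqrt{|t|}\}$. $\mathbb{W} = \{(0,y,t)\} \subset \mathbb{H}$, identified with $\mathbb{R}^{2}$ with metric $d_{\mathrm{par}}((y,t),(\xi,\tau)) = \max\{|y-\xi|,|t-\tau|^{1/2}\}$, and $\mathbb{L} = \{(x,0,0)\}$. Every $p \in \mathbb{H}$ splits uniquely as $p = w \cdot v$ with $w \in \mathbb{W}$, $v \in \mathbb{L}$; $\Pi_{\mathbb{W}}(p) := w = (0,y,t+\tfrac{1}{2}xy)$ and $\Pi_{\mathbb{L}}(p) := v = (x,0,0)$ for $p = (x,y,t)$. A set $\Gamma$ is an intrinsic $L$-Lipschitz graph over $\mathbb{W}$ if $\Pi_{\mathbb{W}}|_{\Gamma}$ is a bijection onto $\mathbb{W}$ and $\|\Pi_{\mathbb{L}}(q^{-1}\cdot p)\| \leq L\|\Pi_{\mathbb{W}}(q^{-1}\cdot p)\|$ for all $p,q \in \Gamma$. By ($\tau_{2}$), for each $y$ the map $t \mapsto \tau(y,t)$ is a bijection of $\mathbb{R}$, so $\phi$ is well defined on all of $\mathbb{W}$. *)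

theory Defs
  imports "HOL-Analysis.Analysis"
begin

type_synonym heis = "real \<times> real \<times> real"

definition hmul :: "heis \<Rightarrow> heis \<Rightarrow> heis" where
  "hmul p q = (case p of (x1, y1, t1) \<Rightarrow> case q of (x2, y2, t2) \<Rightarrow>
     (x1 + x2, y1 + y2, t1 + t2 + (x1 * y2 - x2 * y1) / 2))"

definition hinv :: "heis \<Rightarrow> heis" where
  "hinv p = (case p of (x, y, t) \<Rightarrow> (-x, -y, -t))"

definition hnorm :: "heis \<Rightarrow> real" where
  "hnorm p = (case p of (x, y, t) \<Rightarrow> max (sqrt (x\<^sup>2 + y\<^sup>2)) (sqrt \<bar>t\<bar>))"

definition hdist :: "heis \<Rightarrow> heis \<Rightarrow> real" where
  "hdist p q = hnorm (hmul (hinv q) p)"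

definition Wset :: "heis set" where
  "Wset = {(0, y, t) | y t. True}"

definition Lset :: "heis set" where
  "Lset = {(x, 0, 0) | x. True}"

definition piW :: "heis \<Rightarrow> heis" where
  "piW p = (case p of (x, y, t) \<Rightarrow> (0, y, t + x * y / 2))"

definition piL :: "heis \<Rightarrow> heis" where
  "piL p = (case p of (x, y, t) \<Rightarrow> (x, 0, 0))"

text \<open>Parabolic distance on W identified with R^2 via (y,t) <-> (0,y,t).\<close>
definition dpar :: "real \<times> real \<Rightarrow> real \<times> real \<Rightarrow> real" where
  "dpar a b = (case a of (y, t) \<Rightarrow> case b of (\<xi>, s) \<Rightarrow> max \<bar>y - \<xi>\<bar> (sqrt \<bar>t - s\<bar>))"

definition intrinsic_lipschitz_graph :: "real \<Rightarrow> heis set \<Rightarrow> bool" where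
  "intrinsic_lipschitz_graph L \<Gamma> \<longleftrightarrow>
     bij_betw piW \<Gamma> Wset \<and>
     (\<forall>p\<in>\<Gamma>. \<forall>q\<in>\<Gamma>. hnorm (piL (hmul (hinv q) p)) \<le> L * hnorm (piW (hmul (hinv q) p)))"

text \<open>phi(0,y,tau(y,t)) := (taudot(y,t),0,0); the t is unique by (tau2).\<close>
definition phi :: "(real \<Rightarrow> real \<Rightarrow> real) \<Rightarrow> (real \<Rightarrow> real \<Rightarrow> real) \<Rightarrow> heis \<Rightarrow> heis" where
  "phi \<tau> \<tau>d w = (case w of (_, y, s) \<Rightarrow> (\<tau>d y (THE t. \<tau> y t = s), 0, 0))"

definition Gamma :: "(real \<Rightarrow> real \<Rightarrow> real) \<Rightarrow> (real \<Rightarrow> real \<Rightarrow> real) \<Rightarrow> heis set" where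
  "Gamma \<tau> \<tau>d = (\<lambda>w. hmul w (phi \<tau> \<tau>d w)) ` Wset"

definition Psi :: "(real \<Rightarrow> real \<Rightarrow> real) \<Rightarrow> (real \<Rightarrow> real \<Rightarrow> real) \<Rightarrow> real \<times> real \<Rightarrow> heis" where
  "Psi \<tau> \<tau>d a = (case a of (y, t) \<Rightarrow> hmul (0, y, \<tau> y t) (\<tau>d y t, 0, 0))"

end

theory Submission
  imports Defs
begin


lemma core_key:
  fixes \<eta> \<Sigma> \<theta> D r S U :: real
  assumes th: "\<theta> > 0" and et: "\<eta> > 0" and Sg: "\<Sigma> > 0" and D: "D \<ge> 0" and r: "r \<ge> 0"
    and hU: "\<theta> * r\<^sup>2 \<le> \<bar>U\<bar>"
    and hSU: "\<bar>S - U\<bar> \<le> \<eta> * r * D + 2 * \<Sigma> * D\<^sup>2"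
  shows "r\<^sup>2 \<le> 2 * \<bar>S\<bar> / \<theta> + ((4 * \<Sigma> + \<eta>\<^sup>2 / \<theta>) / \<theta>) * D\<^sup>2"
proof -
  have sq: "0 \<le> (\<theta> * r - \<eta> * D)\<^sup>2" by simp
  then have "2 * \<theta> * (\<eta> * r * D) \<le> \<theta>\<^sup>2 * r\<^sup>2 + \<eta>\<^sup>2 * D\<^sup>2"
    by (simp add: power2_eq_square algebra_simps)
  then have a: "\<eta> * r * D \<le> \<theta> * r\<^sup>2 / 2 + \<eta>\<^sup>2 * D\<^sup>2 / (2 * \<theta>)"
    using th by (simp add: field_simps power2_eq_square)
  have "\<theta> * r\<^sup>2 \<le> \<bar>S\<bar> + \<eta> * r * D + 2 * \<Sigma> * D\<^sup>2" using hU hSU by linarith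
  then have "\<theta> * r\<^sup>2 / 2 \<le> \<bar>S\<bar> + \<eta>\<^sup>2 * D\<^sup>2 / (2 * \<theta>) + 2 * \<Sigma> * D\<^sup>2" using a by linarith
  then have "\<theta> * r\<^sup>2 \<le> 2 * \<bar>S\<bar> + \<eta>\<^sup>2 * D\<^sup>2 / \<theta> + 4 * \<Sigma> * D\<^sup>2" by (simp add: field_simps)
  then have "r\<^sup>2 \<le> (2 * \<bar>S\<bar> + \<eta>\<^sup>2 * D\<^sup>2 / \<theta> + 4 * \<Sigma> * D\<^sup>2) / \<theta>"
    using th by (simp add: field_simps)
  also have "\<dots> = 2 * \<bar>S\<bar> / \<theta> + ((4 * \<Sigma> + \<eta>\<^sup>2 / \<theta>) / \<theta>) * D\<^sup>2"
    using th by (simp add: field_simps)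
  finally show ?thesis .
qed

lemma core_r:
  fixes \<eta> \<Sigma> \<theta> D r S U M c :: real
  assumes th: "\<theta> > 0" and et: "\<eta> > 0" and Sg: "\<Sigma> > 0" and D: "D \<ge> 0" and r: "r \<ge> 0"
    and hU: "\<theta> * r\<^sup>2 \<le> \<bar>U\<bar>"
    and hSU: "\<bar>S - U\<bar> \<le> \<eta> * r * D + 2 * \<Sigma> * D\<^sup>2"
    and c: "c \<ge> 0" and DM: "D \<le> M" and SM: "\<bar>S\<bar> \<le> c * M\<^sup>2"
  shows "r \<le> sqrt (2 * c / \<theta> + (4 * \<Sigma> + \<eta>\<^sup>2 / \<theta>) / \<theta>) * M"
proof -
  define K where "K = (4 * \<Sigma> + \<eta>\<^sup>2 / \<theta>) / \<theta>"
  have K: "K \<ge> 0" using th Sg by (simp add: K_def)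
  have M: "M \<ge> 0" using D DM by linarith
  have "r\<^sup>2 \<le> 2 * \<bar>S\<bar> / \<theta> + K * D\<^sup>2" using core_key[OF th et Sg D r hU hSU] by (simp add: K_def)
  also have "\<dots> \<le> 2 * (c * M\<^sup>2) / \<theta> + K * M\<^sup>2"
    using SM th K D DM by (intro add_mono divide_right_mono mult_left_mono power_mono) auto
  also have "\<dots> = (2 * c / \<theta> + K) * M\<^sup>2" by (simp add: field_simps)
  finally have "sqrt (r\<^sup>2) \<le> sqrt ((2 * c / \<theta> + K) * M\<^sup>2)" by (rule real_sqrt_le_mono)
  then show ?thesis using r M by (simp add: real_sqrt_mult K_def)
qed



lemma taylor_err:
  fixes f f' :: "real \<Rightarrow> real" and \<Sigma> :: real
  assumes S0: "\<Sigma> \<ge> 0" and der: "\<And>y. (f has_real_derivative f' y) (at y)"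
    and lip: "\<And>y1 y2. \<bar>f' y2 - f' y1\<bar> \<le> 2 * \<Sigma> * \<bar>y2 - y1\<bar>"
  shows "\<bar>f a - f b - f' b * (a - b)\<bar> \<le> 2 * \<Sigma> * (a - b)\<^sup>2"
proof -
  have "\<exists>z. \<bar>z - b\<bar> \<le> \<bar>a - b\<bar> \<and> f a - f b = (a - b) * f' z"
  proof (cases a b rule: linorder_cases)
    case less
    then obtain z where "a < z" "z < b" "f b - f a = (b - a) * f' z"
      using MVT2[of a b f f'] der by blast
    then show ?thesis by (intro exI[of _ z]) (auto simp: algebra_simps)
  next
    case equal then show ?thesis by auto
  next
    case greater
    then obtain z where "b < z" "z < a" "f a - f b = (a - b) * f' z"
      using MVT2[of b a f f'] der by blast
    then show ?thesis by (intro exI[of _ z]) (auto simp: algebra_simps)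
  qed
  then obtain z where z: "\<bar>z - b\<bar> \<le> \<bar>a - b\<bar>" "f a - f b = (a - b) * f' z" by blast
  have "\<bar>f a - f b - f' b * (a - b)\<bar> = \<bar>f' z - f' b\<bar> * \<bar>a - b\<bar>"
    using z(2) by (simp add: abs_mult[symmetric] algebra_simps)
  also have "\<dots> \<le> (2 * \<Sigma> * \<bar>a - b\<bar>) * \<bar>a - b\<bar>"
  proof (rule mult_right_mono)
    have "2 * \<Sigma> * \<bar>z - b\<bar> \<le> 2 * \<Sigma> * \<bar>a - b\<bar>" using z(1) S0 by (intro mult_left_mono) auto
    then show "\<bar>f' z - f' b\<bar> \<le> 2 * \<Sigma> * \<bar>a - b\<bar>" using lip[of z b] by linarith
  qed simp
  also have "\<dots> = 2 * \<Sigma> * (a - b)\<^sup>2" by (simp add: power2_eq_square abs_mult_self_eq)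
  finally show ?thesis .
qed

lemma surj_bilip:
  fixes g :: "real \<Rightarrow> real" and \<theta> :: real
  assumes th: "\<theta> > 0"
    and b: "\<And>t1 t2. \<theta> * \<bar>t2 - t1\<bar> \<le> \<bar>g t2 - g t1\<bar> \<and> \<bar>g t2 - g t1\<bar> \<le> \<bar>t2 - t1\<bar> / \<theta>"
  shows "\<exists>t. g t = s"
proof -
  have inj: "inj g"
  proof (rule injI)
    fix x y assume "g x = g y"
    with b[of x y] th show "x = y" by (auto simp: mult_le_0_iff)
  qed
  have "(1/\<theta>)-lipschitz_on UNIV g"
    by (rule lipschitz_onI) (use b th in \<open>auto simp: dist_real_def abs_minus_commute\<close>)
  then have cont: "continuous_on A g" for A
    using lipschitz_on_continuous_on continuous_on_subset by blast
  define R where "R = \<bar>s - g 0\<bar> / \<theta> + 1"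
  have R: "R > 0" "\<theta> * R > \<bar>s - g 0\<bar>" using th by (auto simp: R_def field_simps)
  have bR1: "\<bar>g R - g 0\<bar> \<ge> \<theta> * R" using b[of 0 R] R by (simp add: abs_minus_commute)
  have bR2: "\<bar>g (-R) - g 0\<bar> \<ge> \<theta> * R" using b[of 0 "-R"] R by (simp add: abs_minus_commute)
  have "(g (-R) < g 0 \<and> g 0 < g R) \<or> (g R < g 0 \<and> g 0 < g (-R))"
    using continuous_inj_imp_mono[of "-R" 0 R g] R cont inj_on_subset[OF inj] by auto
  then show ?thesis
  proof
    assume h: "g (-R) < g 0 \<and> g 0 < g R"
    then have "g (-R) \<le> s" "s \<le> g R" using bR1 bR2 R by auto
    then show ?thesis using IVT'[of g "-R" s R] cont R by auto
  next
    assume h: "g R < g 0 \<and> g 0 < g (-R)"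
    then have "g R \<le> s" "s \<le> g (-R)" using bR1 bR2 R by auto
    then show ?thesis using IVT2'[of g R s "-R"] cont R by auto
  qed
qed


lemma psi_diff:
  "hmul (hinv (Psi \<tau> \<tau>d (y2,t2))) (Psi \<tau> \<tau>d (y1,t1)) =
    (\<tau>d y1 t1 - \<tau>d y2 t2, y1 - y2, \<tau> y1 t1 - \<tau> y2 t2 - (\<tau>d y1 t1 + \<tau>d y2 t2) * (y1 - y2) / 2)"
  by (simp add: Psi_def hmul_def hinv_def field_simps)

lemma hnorm_piL: "hnorm (piL (a, b, c)) = \<bar>a\<bar>"
  by (simp add: hnorm_def piL_def)

lemma hnorm_piW: "hnorm (piW (a, b, c)) = max \<bar>b\<bar> (sqrt \<bar>c + a * b / 2\<bar>)"
  by (simp add: hnorm_def piW_def)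

lemma sqrt_sq_le: "sqrt (a\<^sup>2 + b\<^sup>2) \<le> \<bar>a\<bar> + \<bar>b\<bar>"
proof -
  have "a\<^sup>2 + b\<^sup>2 \<le> (\<bar>a\<bar> + \<bar>b\<bar>)\<^sup>2" by (simp add: power2_eq_square algebra_simps)
  then have "sqrt (a\<^sup>2 + b\<^sup>2) \<le> sqrt ((\<bar>a\<bar> + \<bar>b\<bar>)\<^sup>2)" by (rule real_sqrt_le_mono)
  then show ?thesis by simp
qed

lemma pair_est:
  fixes \<eta> \<Sigma> \<theta> :: real and \<tau> \<tau>d :: "real \<Rightarrow> real \<Rightarrow> real"
  assumes th: "\<theta> > 0" and et: "\<eta> > 0" and Sg: "\<Sigma> > 0"
    and A1: "\<forall>y t. ((\<lambda>y'. \<tau> y' t) has_real_derivative \<tau>d y t) (at y)"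
    and A2: "\<forall>t y1 y2. \<bar>\<tau>d y2 t - \<tau>d y1 t\<bar> \<le> 2 * \<Sigma> * \<bar>y2 - y1\<bar>"
    and A3: "\<forall>t1 t2 y. \<theta> * \<bar>t2 - t1\<bar> \<le> \<bar>\<tau> y t2 - \<tau> y t1\<bar> \<and>
                 \<bar>\<tau> y t2 - \<tau> y t1\<bar> \<le> \<bar>t2 - t1\<bar> / \<theta>"
    and A4: "\<forall>y t1 t2. \<bar>\<tau>d y t2 - \<tau>d y t1\<bar> \<le> \<eta> * sqrt \<bar>t2 - t1\<bar>"
  defines "K \<equiv> (4 * \<Sigma> + \<eta>\<^sup>2 / \<theta>) / \<theta>"
  defines "L \<equiv> 2 * \<Sigma> + \<eta> * sqrt (2 * 1 / \<theta> + K)"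
  defines "C \<equiv> 2 * \<Sigma> + \<eta> + 1 + sqrt (1 / \<theta> + 2 * \<eta> + 3 * \<Sigma>) + sqrt (2 * (3/2) / \<theta> + K)"
  shows "\<bar>\<tau>d y1 t1 - \<tau>d y2 t2\<bar> \<le> L * max \<bar>y1 - y2\<bar> (sqrt \<bar>\<tau> y1 t1 - \<tau> y2 t2 - \<tau>d y2 t2 * (y1 - y2)\<bar>)"
    and "dpar (y1,t1) (y2,t2) / C \<le> hdist (Psi \<tau> \<tau>d (y1,t1)) (Psi \<tau> \<tau>d (y2,t2))"
    and "hdist (Psi \<tau> \<tau>d (y1,t1)) (Psi \<tau> \<tau>d (y2,t2)) \<le> C * dpar (y1,t1) (y2,t2)"
proof -
  define D where "D = \<bar>y1 - y2\<bar>"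
  define r where "r = sqrt \<bar>t1 - t2\<bar>"
  define X where "X = \<bar>\<tau>d y1 t1 - \<tau>d y2 t2\<bar>"
  define U where "U = \<tau> y2 t1 - \<tau> y2 t2"
  define S where "S = \<tau> y1 t1 - \<tau> y2 t2 - \<tau>d y2 t2 * (y1 - y2)"
  define T where "T = \<tau> y1 t1 - \<tau> y2 t2 - (\<tau>d y1 t1 + \<tau>d y2 t2) * (y1 - y2) / 2"
  have D: "D \<ge> 0" and r: "r \<ge> 0" and X: "X \<ge> 0" by (auto simp: D_def r_def X_def)
  have r2: "r\<^sup>2 = \<bar>t1 - t2\<bar>" by (simp add: r_def)
  have K: "K \<ge> 0" using th Sg by (simp add: K_def)
  have hX: "X \<le> 2 * \<Sigma> * D + \<eta> * r"
  proof -
    have "X \<le> \<bar>\<tau>d y1 t1 - \<tau>d y2 t1\<bar> + \<bar>\<tau>d y2 t1 - \<tau>d y2 t2\<bar>" by (simp add: X_def)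
    moreover have "\<bar>\<tau>d y1 t1 - \<tau>d y2 t1\<bar> \<le> 2 * \<Sigma> * D" using A2 by (simp add: D_def)
    moreover have "\<bar>\<tau>d y2 t1 - \<tau>d y2 t2\<bar> \<le> \<eta> * r" using A4[rule_format, of y2 t2 t1]
      by (simp add: r_def abs_minus_commute)
    ultimately show ?thesis by linarith
  qed
  have hU: "\<theta> * r\<^sup>2 \<le> \<bar>U\<bar>" "\<bar>U\<bar> \<le> r\<^sup>2 / \<theta>"
    using A3[rule_format, of t1 t2 y2] by (auto simp: r2 U_def abs_minus_commute)
  have hSU: "\<bar>S - U\<bar> \<le> \<eta> * r * D + 2 * \<Sigma> * D\<^sup>2"
  proof -
    have tay: "\<bar>\<tau> y1 t1 - \<tau> y2 t1 - \<tau>d y2 t1 * (y1 - y2)\<bar> \<le> 2 * \<Sigma> * (y1 - y2)\<^sup>2"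
      using taylor_err[of \<Sigma> "\<lambda>y. \<tau> y t1" "\<lambda>y. \<tau>d y t1" y1 y2] A1 A2 Sg by auto
    have h2: "\<bar>(\<tau>d y2 t1 - \<tau>d y2 t2) * (y1 - y2)\<bar> \<le> \<eta> * r * D"
    proof -
      have "\<bar>\<tau>d y2 t1 - \<tau>d y2 t2\<bar> \<le> \<eta> * r" using A4[rule_format, of y2 t2 t1]
        by (simp add: r_def abs_minus_commute)
      then show ?thesis unfolding abs_mult D_def by (intro mult_right_mono) auto
    qed
    have "S - U = (\<tau> y1 t1 - \<tau> y2 t1 - \<tau>d y2 t1 * (y1 - y2)) + (\<tau>d y2 t1 - \<tau>d y2 t2) * (y1 - y2)"
      by (simp add: S_def U_def algebra_simps)
    then show ?thesis using tay h2 by (simp add: D_def)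
  qed
  have hTS: "\<bar>T - S\<bar> = X * D / 2"
  proof -
    have "T - S = - ((\<tau>d y1 t1 - \<tau>d y2 t2) * (y1 - y2)) / 2" by (simp add: T_def S_def field_simps)
    then show ?thesis by (simp add: X_def D_def abs_mult)
  qed
  have hd: "hdist (Psi \<tau> \<tau>d (y1,t1)) (Psi \<tau> \<tau>d (y2,t2)) =
      max (sqrt ((\<tau>d y1 t1 - \<tau>d y2 t2)\<^sup>2 + (y1 - y2)\<^sup>2)) (sqrt \<bar>T\<bar>)"
    by (simp add: hdist_def psi_diff hnorm_def T_def)
  have dp: "dpar (y1,t1) (y2,t2) = max D r" by (simp add: dpar_def D_def r_def)
  show "\<bar>\<tau>d y1 t1 - \<tau>d y2 t2\<bar> \<le> L * max \<bar>y1 - y2\<bar> (sqrt \<bar>\<tau> y1 t1 - \<tau> y2 t2 - \<tau>d y2 t2 * (y1 - y2)\<bar>)"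
  proof -
    define M where "M = max D (sqrt \<bar>S\<bar>)"
    have M: "D \<le> M" "\<bar>S\<bar> \<le> 1 * M\<^sup>2"
    proof -
      show "D \<le> M" by (simp add: M_def)
      have "sqrt \<bar>S\<bar> \<le> M" by (simp add: M_def)
      then have "(sqrt \<bar>S\<bar>)\<^sup>2 \<le> M\<^sup>2" by (intro power_mono) auto
      then show "\<bar>S\<bar> \<le> 1 * M\<^sup>2" by simp
    qed
    have rM: "r \<le> sqrt (2 * 1 / \<theta> + K) * M"
      using core_r[OF th et Sg D r hU(1) hSU _ M(1) M(2)] by (simp add: K_def)
    have "X \<le> 2 * \<Sigma> * D + \<eta> * r" by (rule hX)
    also have "\<dots> \<le> 2 * \<Sigma> * M + \<eta> * (sqrt (2 * 1 / \<theta> + K) * M)"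
      using M(1) rM Sg et by (intro add_mono mult_left_mono) auto
    also have "\<dots> = L * M" by (simp add: L_def algebra_simps)
    finally show ?thesis by (simp add: X_def M_def D_def S_def)
  qed
  define B where "B = 1 / \<theta> + 2 * \<eta> + 3 * \<Sigma>"
  have B: "B \<ge> 0" using th et Sg by (simp add: B_def)
  have sq1: "0 \<le> sqrt (1 / \<theta> + 2 * \<eta> + 3 * \<Sigma>)" and sq2: "0 \<le> sqrt (2 * (3/2) / \<theta> + K)"
    using th et Sg K by auto
  have Cpos: "C \<ge> 1" using Sg et th K real_sqrt_ge_zero[of "1 / \<theta> + 2 * \<eta> + 3 * \<Sigma>"] real_sqrt_ge_zero[of "2 * (3/2) / \<theta> + K"] by (simp add: C_def)
  show "hdist (Psi \<tau> \<tau>d (y1,t1)) (Psi \<tau> \<tau>d (y2,t2)) \<le> C * dpar (y1,t1) (y2,t2)"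
  proof -
    define P where "P = max D r"
    have P: "D \<le> P" "r \<le> P" "P \<ge> 0" using D by (auto simp: P_def)
    have rr: "r\<^sup>2 \<le> P\<^sup>2" "D\<^sup>2 \<le> P\<^sup>2" "r * D \<le> P * P" using P D r
      by (auto intro: power_mono mult_mono)
    have XP: "X \<le> (2 * \<Sigma> + \<eta>) * P"
    proof -
      have "2 * \<Sigma> * D \<le> 2 * \<Sigma> * P" using P Sg by (intro mult_left_mono) auto
      moreover have "\<eta> * r \<le> \<eta> * P" using P et by (intro mult_left_mono) auto
      ultimately show ?thesis using hX by (simp add: algebra_simps)
    qed
    have XD: "X * D \<le> (2 * \<Sigma> + \<eta>) * P * P"
      using XP P X D Sg et by (intro mult_mono) auto
    have "\<bar>S\<bar> \<le> r\<^sup>2 / \<theta> + \<eta> * r * D + 2 * \<Sigma> * D\<^sup>2" using hU hSU by linarith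
    also have "\<dots> \<le> P\<^sup>2 / \<theta> + \<eta> * (P * P) + 2 * \<Sigma> * P\<^sup>2"
      using rr th et Sg by (intro add_mono divide_right_mono) (auto simp: mult.assoc intro: mult_left_mono)
    finally have SP: "\<bar>S\<bar> \<le> P\<^sup>2 / \<theta> + \<eta> * (P * P) + 2 * \<Sigma> * P\<^sup>2" .
    have "\<bar>T\<bar> \<le> \<bar>S\<bar> + X * D / 2" using hTS by linarith
    also have "\<dots> \<le> B * P\<^sup>2"
    proof -
      have pe: "0 \<le> \<eta> * (P * P)" using et P by simp
      have eq: "B * P\<^sup>2 = (P * P) / \<theta> + 2 * (\<eta> * (P * P)) + 3 * (\<Sigma> * (P * P))"
        by (simp add: B_def power2_eq_square algebra_simps)
      have SP': "\<bar>S\<bar> \<le> (P * P) / \<theta> + \<eta> * (P * P) + 2 * (\<Sigma> * (P * P))"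
        using SP by (simp add: power2_eq_square algebra_simps)
      have XD': "X * D \<le> 2 * (\<Sigma> * (P * P)) + \<eta> * (P * P)"
        using XD by (simp add: algebra_simps)
      show ?thesis unfolding eq using pe SP' XD' by linarith
    qed
    finally have "sqrt \<bar>T\<bar> \<le> sqrt (B * P\<^sup>2)" by (rule real_sqrt_le_mono)
    then have T1: "sqrt \<bar>T\<bar> \<le> sqrt B * P" using P by (simp add: real_sqrt_mult)
    have "sqrt ((\<tau>d y1 t1 - \<tau>d y2 t2)\<^sup>2 + (y1 - y2)\<^sup>2) \<le> X + D"
      using sqrt_sq_le by (simp add: X_def D_def)
    also have "\<dots> \<le> (2 * \<Sigma> + \<eta> + 1) * P" using XP P by (simp add: algebra_simps)
    finally have T2: "sqrt ((\<tau>d y1 t1 - \<tau>d y2 t2)\<^sup>2 + (y1 - y2)\<^sup>2) \<le> (2 * \<Sigma> + \<eta> + 1) * P" .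
    have c1: "(2 * \<Sigma> + \<eta> + 1) * P \<le> C * P" using P K sq1 sq2 by (intro mult_right_mono) (auto simp: C_def)
    have c2: "sqrt B * P \<le> C * P" using P Sg et sq1 sq2 by (intro mult_right_mono) (auto simp: C_def B_def)
    show ?thesis unfolding hd dp P_def[symmetric] using T1 T2 c1 c2 by linarith
  qed
  show "dpar (y1,t1) (y2,t2) / C \<le> hdist (Psi \<tau> \<tau>d (y1,t1)) (Psi \<tau> \<tau>d (y2,t2))"
  proof -
    define H where "H = hdist (Psi \<tau> \<tau>d (y1,t1)) (Psi \<tau> \<tau>d (y2,t2))"
    have HD: "D \<le> H" unfolding H_def hd D_def
      using real_sqrt_ge_abs2[where x="\<tau>d y1 t1 - \<tau>d y2 t2" and y="y1 - y2"] by linarith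
    have HX: "X \<le> H" unfolding H_def hd X_def
      using real_sqrt_ge_abs1[where x="\<tau>d y1 t1 - \<tau>d y2 t2" and y="y1 - y2"] by linarith
    have H0: "H \<ge> 0" using D HD by linarith
    have HT: "\<bar>T\<bar> \<le> H\<^sup>2"
    proof -
      have "sqrt \<bar>T\<bar> \<le> H" unfolding H_def hd by simp
      then have "(sqrt \<bar>T\<bar>)\<^sup>2 \<le> H\<^sup>2" by (intro power_mono) auto
      then show ?thesis by simp
    qed
    have XD: "X * D \<le> H * H" using HX HD X D by (intro mult_mono) auto
    have SH: "\<bar>S\<bar> \<le> (3/2) * H\<^sup>2" using HT hTS XD unfolding power2_eq_square by linarith
    have rH: "r \<le> sqrt (2 * (3/2) / \<theta> + K) * H"
      using core_r[OF th et Sg D r hU(1) hSU _ HD SH] by (simp add: K_def)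
    have "max D r \<le> (1 + sqrt (2 * (3/2) / \<theta> + K)) * H" using HD rH H0 K mult_nonneg_nonneg[OF H0 sq2]
      by (simp add: algebra_simps)
    also have "\<dots> \<le> C * H" using H0 Sg et sq1 sq2 by (intro mult_right_mono) (auto simp: C_def)
    finally have "max D r \<le> C * H" .
    then show ?thesis unfolding dp H_def[symmetric] using Cpos by (simp add: field_simps)
  qed
qed


theorem proposition7p5:
  fixes \<eta> \<Sigma> \<theta> :: real
  assumes "\<eta> > 0" and "\<Sigma> > 0" and "\<theta> > 0"
  shows "\<exists>L C. C > 0 \<and>
    (\<forall>(\<tau> :: real \<Rightarrow> real \<Rightarrow> real) (\<tau>d :: real \<Rightarrow> real \<Rightarrow> real).
      (\<forall>y t. ((\<lambda>y'. \<tau> y' t) has_real_derivative \<tau>d y t) (at y)) \<longrightarrow>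
      (\<forall>t y1 y2. \<bar>\<tau>d y2 t - \<tau>d y1 t\<bar> \<le> 2 * \<Sigma> * \<bar>y2 - y1\<bar>) \<longrightarrow>
      (\<forall>t1 t2 y. \<theta> * \<bar>t2 - t1\<bar> \<le> \<bar>\<tau> y t2 - \<tau> y t1\<bar> \<and>
                 \<bar>\<tau> y t2 - \<tau> y t1\<bar> \<le> \<bar>t2 - t1\<bar> / \<theta>) \<longrightarrow>
      (\<forall>y t1 t2. \<bar>\<tau>d y t2 - \<tau>d y t1\<bar> \<le> \<eta> * sqrt \<bar>t2 - t1\<bar>) \<longrightarrow>
      (\<forall>w\<in>Wset. phi \<tau> \<tau>d w \<in> Lset) \<and>
      intrinsic_lipschitz_graph L (Gamma \<tau> \<tau>d) \<and>
      bij_betw (Psi \<tau> \<tau>d) UNIV (Gamma \<tau> \<tau>d) \<and>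
      (\<forall>a b. dpar a b / C \<le> hdist (Psi \<tau> \<tau>d a) (Psi \<tau> \<tau>d b) \<and>
             hdist (Psi \<tau> \<tau>d a) (Psi \<tau> \<tau>d b) \<le> C * dpar a b))"
proof -
  note th = \<open>\<theta> > 0\<close> and et = \<open>\<eta> > 0\<close> and Sg = \<open>\<Sigma> > 0\<close>
  define K where "K \<equiv> (4 * \<Sigma> + \<eta>\<^sup>2 / \<theta>) / \<theta>"
  define L where "L \<equiv> 2 * \<Sigma> + \<eta> * sqrt (2 * 1 / \<theta> + K)"
  define C where "C \<equiv> 2 * \<Sigma> + \<eta> + 1 + sqrt (1 / \<theta> + 2 * \<eta> + 3 * \<Sigma>) + sqrt (2 * (3/2) / \<theta> + K)"
  have K: "K \<ge> 0" using th Sg by (simp add: K_def)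
  have sq1: "0 \<le> sqrt (1 / \<theta> + 2 * \<eta> + 3 * \<Sigma>)" and sq2: "0 \<le> sqrt (2 * (3/2) / \<theta> + K)"
    using th et Sg K by auto
  have Cpos: "C > 0" using Sg et sq1 sq2 unfolding C_def by linarith
  show ?thesis
  proof (intro exI conjI allI impI)
    show "C > 0" by (rule Cpos)
    fix \<tau> \<tau>d :: "real \<Rightarrow> real \<Rightarrow> real"
    assume A1: "\<forall>y t. ((\<lambda>y'. \<tau> y' t) has_real_derivative \<tau>d y t) (at y)"
      and A2: "\<forall>t y1 y2. \<bar>\<tau>d y2 t - \<tau>d y1 t\<bar> \<le> 2 * \<Sigma> * \<bar>y2 - y1\<bar>"
      and A3: "\<forall>t1 t2 y. \<theta> * \<bar>t2 - t1\<bar> \<le> \<bar>\<tau> y t2 - \<tau> y t1\<bar> \<and>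
                 \<bar>\<tau> y t2 - \<tau> y t1\<bar> \<le> \<bar>t2 - t1\<bar> / \<theta>"
      and A4: "\<forall>y t1 t2. \<bar>\<tau>d y t2 - \<tau>d y t1\<bar> \<le> \<eta> * sqrt \<bar>t2 - t1\<bar>"
    note PE = pair_est[OF th et Sg A1 A2 A3 A4, folded K_def, folded L_def C_def]
    have injt: "\<tau> y t1 = \<tau> y t2 \<Longrightarrow> t1 = t2" for y t1 t2
      using A3[rule_format, of t1 t2 y] th by (auto simp: mult_le_0_iff)
    have surjt: "\<exists>t. \<tau> y t = s" for y s
      using surj_bilip[of \<theta> "\<tau> y" s] th A3 by blast
    have theT: "(THE t'. \<tau> y t' = \<tau> y t) = t" for y t
      using injt by (intro the_equality) auto
    have PsiW: "Psi \<tau> \<tau>d (y, t) = hmul (0, y, \<tau> y t) (phi \<tau> \<tau>d (0, y, \<tau> y t))" for y t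
      by (simp add: Psi_def phi_def theT)
    have Gam: "Gamma \<tau> \<tau>d = range (Psi \<tau> \<tau>d)"
    proof
      show "Gamma \<tau> \<tau>d \<subseteq> range (Psi \<tau> \<tau>d)"
      proof
        fix p assume "p \<in> Gamma \<tau> \<tau>d"
        then obtain y s where p: "p = hmul (0, y, s) (phi \<tau> \<tau>d (0, y, s))"
          by (auto simp: Gamma_def Wset_def)
        obtain t where "\<tau> y t = s" using surjt by blast
        then have "p = Psi \<tau> \<tau>d (y, t)" using p PsiW by simp
        then show "p \<in> range (Psi \<tau> \<tau>d)" by blast
      qed
      show "range (Psi \<tau> \<tau>d) \<subseteq> Gamma \<tau> \<tau>d"
      proof
        fix p assume "p \<in> range (Psi \<tau> \<tau>d)"
        then obtain y t where p: "p = Psi \<tau> \<tau>d (y, t)" by auto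
        have "(0, y, \<tau> y t) \<in> Wset" by (simp add: Wset_def)
        then show "p \<in> Gamma \<tau> \<tau>d" unfolding p PsiW Gamma_def by blast
      qed
    qed
    have Psi_eq: "Psi \<tau> \<tau>d (y, t) = (\<tau>d y t, y, \<tau> y t - \<tau>d y t * y / 2)" for y t
      by (simp add: Psi_def hmul_def)
    have piW_Psi: "piW (Psi \<tau> \<tau>d (y, t)) = (0, y, \<tau> y t)" for y t
      by (simp add: Psi_eq piW_def)
    have injPsi: "inj (Psi \<tau> \<tau>d)"
    proof (rule injI)
      fix a b assume h: "Psi \<tau> \<tau>d a = Psi \<tau> \<tau>d b"
      obtain y1 t1 where a: "a = (y1, t1)" by (cases a)
      obtain y2 t2 where b: "b = (y2, t2)" by (cases b)
      from h have "piW (Psi \<tau> \<tau>d a) = piW (Psi \<tau> \<tau>d b)" by simp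
      then have "y1 = y2" "\<tau> y1 t1 = \<tau> y2 t2" by (auto simp: a b piW_Psi)
      then show "a = b" using injt a b by auto
    qed
    show "\<forall>w\<in>Wset. phi \<tau> \<tau>d w \<in> Lset"
      by (auto simp: Wset_def Lset_def phi_def)
    show "bij_betw (Psi \<tau> \<tau>d) UNIV (Gamma \<tau> \<tau>d)"
      unfolding Gam using injPsi by (simp add: bij_betw_def)
    show "intrinsic_lipschitz_graph L (Gamma \<tau> \<tau>d)"
      unfolding intrinsic_lipschitz_graph_def
    proof (intro conjI ballI)
      show "bij_betw piW (Gamma \<tau> \<tau>d) Wset"
        unfolding bij_betw_def
      proof
        show "inj_on piW (Gamma \<tau> \<tau>d)"
        proof (rule inj_onI)
          fix p q assume "p \<in> Gamma \<tau> \<tau>d" "q \<in> Gamma \<tau> \<tau>d" "piW p = piW q"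
          then obtain a b where "p = Psi \<tau> \<tau>d a" "q = Psi \<tau> \<tau>d b" "piW (Psi \<tau> \<tau>d a) = piW (Psi \<tau> \<tau>d b)"
            unfolding Gam by auto
          moreover have "a = b"
          proof -
            obtain y1 t1 where a: "a = (y1, t1)" by (cases a)
            obtain y2 t2 where b: "b = (y2, t2)" by (cases b)
            from calculation(3) have "y1 = y2" "\<tau> y1 t1 = \<tau> y2 t2" by (auto simp: a b piW_Psi)
            then show "a = b" using injt a b by auto
          qed
          ultimately show "p = q" by simp
        qed
        show "piW ` Gamma \<tau> \<tau>d = Wset"
        proof
          show "piW ` Gamma \<tau> \<tau>d \<subseteq> Wset" unfolding Gam by (auto simp: piW_Psi Wset_def)
          show "Wset \<subseteq> piW ` Gamma \<tau> \<tau>d"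
          proof
            fix w assume "w \<in> Wset"
            then obtain y s where w: "w = (0, y, s)" by (auto simp: Wset_def)
            obtain t where "\<tau> y t = s" using surjt by blast
            then have "w = piW (Psi \<tau> \<tau>d (y, t))" by (simp add: piW_Psi w)
            then show "w \<in> piW ` Gamma \<tau> \<tau>d" unfolding Gam by blast
          qed
        qed
      qed
      fix p q assume "p \<in> Gamma \<tau> \<tau>d" "q \<in> Gamma \<tau> \<tau>d"
      then obtain y1 t1 y2 t2 where p: "p = Psi \<tau> \<tau>d (y1, t1)" and q: "q = Psi \<tau> \<tau>d (y2, t2)"
        unfolding Gam by auto
      have e: "(\<tau> y1 t1 - \<tau> y2 t2 - (\<tau>d y1 t1 + \<tau>d y2 t2) * (y1 - y2) / 2) +
                (\<tau>d y1 t1 - \<tau>d y2 t2) * (y1 - y2) / 2 = \<tau> y1 t1 - \<tau> y2 t2 - \<tau>d y2 t2 * (y1 - y2)"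
        by (simp add: field_simps)
      show "hnorm (piL (hmul (hinv q) p)) \<le> L * hnorm (piW (hmul (hinv q) p))"
        unfolding p q psi_diff hnorm_piL hnorm_piW e using PE(1) by simp
    qed
    show "dpar a b / C \<le> hdist (Psi \<tau> \<tau>d a) (Psi \<tau> \<tau>d b)" for a b
      using PE(2) by (cases a; cases b) simp
    show "hdist (Psi \<tau> \<tau>d a) (Psi \<tau> \<tau>d b) \<le> C * dpar a b" for a b
      using PE(3) by (cases a; cases b) simp
  qed
qed

end
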